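(* Let $G$ be a discrete group, $\mathfrak g$ a finite string of elements of $G$ and $\mathcal E$ a finite partition of $G$. Suppose the graph $\Gamma(G,\mathfrak g,\mathcal E)$ has a directed edge from a vertex $A=(a_C)_{C\in Con(\mathfrak g,\mathcal E)}$ to a vertex $B=(b_C)_{C\in Con(\mathfrak g,\mathcal E)}$ such that $a_C\in\{0,1\}$ and $b_C-a_C>0$ for every $C\in Con(\mathfrak g,\mathcal E)$. Then $G$ admits a paradoxical decomposition (whose pieces are subsets of the sets $x_0(C)$ and their translates).
   Context: Configurations: for $\mathfrak g=(g_1,\dots,g_n)$ and a partition $\mathcal E=\{E_1,\dots,E_m\}$ of $G$, a configuration is $C=(c_0,\dots,c_n)\in\{1,\dots,m\}^{n+1}$ such that some $x\in G$ has $x\in E_{c_0}$ and $g_ix\in E_{c_i}$ ($1\le i\le n$); $Con(\mathfrak g,\mathcal E)$ is the finite set of configurations, and $x_0(C)=E_{c_0}\cap\bigcap_{j=1}^ng_j^{-1}E_{c_j}$; the sets $x_0(C)$ partition $G$. The graph $\Gamma=\Gamma(G,\mathfrak g,\mathcal E)$: its vertices are all tuples $(a_C)_{C\in Con(\mathfrak g,\mathcal E)}$ of nonnegative integers. There is a directed edge from $A=(a_C)$ to $B=(b_C)$ if the set $\bigsqcup_{C:\,a_C\neq0}x_0(C)$ admits a partition into $b=\sum_Cb_C$ pieces, indexed as $\{A_{C,k}: C\in Con(\mathfrak g,\mathcal E),\,1\le k\le b_C\}$, together with elements $h_{C,k}\in G$ such that $h_{C,k}A_{C,k}=x_0(C)$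 for every $C$ and every $1\le k\le b_C$. A paradoxical decomposition of $G$: pairwise disjoint subsets $A_1,\dots,A_r,B_1,\dots,B_s$ of $G$ and elements $a_i,b_j\in G$ with $G=\bigcup_ia_iA_i=\bigcup_jb_jB_j$. *)

theory Defs
  imports Main
begin

text \<open>The group G is an arbitrary (not necessarily commutative) group, written
additively via the type class group_add; the action of g on x is g + x and
a left translate g A is the image ((+) g) ` A.  The string g_1..g_n is a list
gs (gs ! (i-1) = g_i); the partition E_1..E_m is a list Es (Es ! (i-1) = E_i),
so configurations are lists of indices in {0..<m} of length n+1.\<close>

definition is_partition :: "'a set list \<Rightarrow> bool" where
  "is_partition Es \<longleftrightarrow>
     (\<forall>i<length Es. Es ! i \<noteq> {}) \<and>
     (\<forall>i<length Es. \<forall>j<length Es. i \<noteq> j \<longrightarrow> Es ! i \<inter> Es ! j = {}) \<and>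
     (\<Union>i<length Es. Es ! i) = UNIV"

definition x0 :: "'a::group_add list \<Rightarrow> 'a set list \<Rightarrow> nat list \<Rightarrow> 'a set" where
  "x0 gs Es C = {x. x \<in> Es ! (C ! 0) \<and> (\<forall>i<length gs. gs ! i + x \<in> Es ! (C ! Suc i))}"

definition Con :: "'a::group_add list \<Rightarrow> 'a set list \<Rightarrow> nat list set" where
  "Con gs Es = {C. length C = Suc (length gs) \<and> (\<forall>i<length C. C ! i < length Es)
                   \<and> x0 gs Es C \<noteq> {}}"

text \<open>Vertices of Gamma are tuples of nonnegative integers indexed by Con; we
represent them as functions nat list => nat, only the values on Con matter.\<close>

definition edge :: "'a::group_add list \<Rightarrow> 'a set list \<Rightarrow> (nat list \<Rightarrow> nat) \<Rightarrow> (nat list \<Rightarrow> nat) \<Rightarrow> bool" where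
  "edge gs Es A B \<longleftrightarrow>
     (\<exists>(P :: nat list \<Rightarrow> nat \<Rightarrow> 'a set) (h :: nat list \<Rightarrow> nat \<Rightarrow> 'a).
        (\<forall>C\<in>Con gs Es. \<forall>k\<in>{1..B C}. ((+) (h C k)) ` (P C k) = x0 gs Es C) \<and>
        (\<forall>C\<in>Con gs Es. \<forall>k\<in>{1..B C}. \<forall>D\<in>Con gs Es. \<forall>l\<in>{1..B D}.
            (C, k) \<noteq> (D, l) \<longrightarrow> P C k \<inter> P D l = {}) \<and>
        (\<Union>C\<in>Con gs Es. \<Union>k\<in>{1..B C}. P C k) = (\<Union>C\<in>{C\<in>Con gs Es. A C \<noteq> 0}. x0 gs Es C))"

definition paradoxical :: "'a::group_add itself \<Rightarrow> bool" where
  "paradoxical _ \<longleftrightarrow>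
     (\<exists>(r::nat) (s::nat) (As :: nat \<Rightarrow> 'a set) (Bs :: nat \<Rightarrow> 'a set) (a :: nat \<Rightarrow> 'a) (b :: nat \<Rightarrow> 'a).
        (\<forall>i<r. \<forall>j<r. i \<noteq> j \<longrightarrow> As i \<inter> As j = {}) \<and>
        (\<forall>i<s. \<forall>j<s. i \<noteq> j \<longrightarrow> Bs i \<inter> Bs j = {}) \<and>
        (\<forall>i<r. \<forall>j<s. As i \<inter> Bs j = {}) \<and>
        (\<Union>i<r. ((+) (a i)) ` As i) = UNIV \<and>
        (\<Union>j<s. ((+) (b j)) ` Bs j) = UNIV)"

end

theory Submission
  imports Defs
begin

lemma part_uniq:
  assumes "is_partition Es" "a < length Es" "b < length Es" "x \<in> Es ! a" "x \<in> Es ! b"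
  shows "a = b"
  using assms unfolding is_partition_def by blast

lemma x0_disj:
  assumes P: "is_partition Es" and C: "C \<in> Con gs Es" and D: "D \<in> Con gs Es"
    and x: "x \<in> x0 gs Es C" "x \<in> x0 gs Es D"
  shows "C = D"
proof (rule nth_equalityI)
  show "length C = length D" using C D by (simp add: Con_def)
  fix i assume i: "i < length C"
  have lD: "i < length D" using C D i by (simp add: Con_def)
  show "C ! i = D ! i"
  proof (cases i)
    case 0
    then show ?thesis using x i lD C D
      by (intro part_uniq[OF P, of _ _ x]) (auto simp: Con_def x0_def)
  next
    case (Suc j)
    have j: "j < length gs" using i Suc C by (simp add: Con_def)
    show ?thesis using x i lD C D Suc j
      by (intro part_uniq[OF P, of _ _ "gs ! j + x"]) (auto simp: Con_def x0_def)
  qed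
qed

lemma x0_cover:
  assumes P: "is_partition Es"
  shows "\<exists>C\<in>Con gs Es. x \<in> x0 gs Es C"
proof -
  define f where "f y = (SOME i. i < length Es \<and> y \<in> Es ! i)" for y
  have f: "f y < length Es \<and> y \<in> Es ! f y" for y
  proof -
    have "\<exists>i. i < length Es \<and> y \<in> Es ! i" using P unfolding is_partition_def by blast
    then show ?thesis unfolding f_def by (rule someI_ex)
  qed
  define C where "C = f x # map (\<lambda>g. f (g + x)) gs"
  have xin: "x \<in> x0 gs Es C" using f by (simp add: x0_def C_def)
  have "C \<in> Con gs Es" unfolding Con_def
  proof (intro CollectI conjI allI impI)
    show "length C = Suc (length gs)" by (simp add: C_def)
    fix i assume "i < length C" then show "C ! i < length Es"
      using f by (cases i) (auto simp: C_def)
  next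
    show "x0 gs Es C \<noteq> {}" using xin by blast
  qed
  then show ?thesis using xin by blast
qed

lemma Con_finite: "finite (Con gs Es)"
proof -
  have "Con gs Es \<subseteq> {C. set C \<subseteq> {..<length Es} \<and> length C = Suc (length gs)}"
    by (auto simp: Con_def in_set_conv_nth)
  moreover have "finite {C. set C \<subseteq> {..<length Es} \<and> length C = Suc (length gs)}"
    by (rule finite_lists_length_eq) simp
  ultimately show ?thesis by (rule finite_subset)
qed

theorem proposition4p2:
  fixes gs :: "'a::group_add list" and Es :: "'a set list"
    and A B :: "nat list \<Rightarrow> nat"
  assumes "is_partition Es"
    and "edge gs Es A B"
    and "\<forall>C\<in>Con gs Es. A C \<in> {0, 1}"
    and "\<forall>C\<in>Con gs Es. B C > A C"
  shows "paradoxical TYPE('a)"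
proof -
  note P = assms(1)
  let ?Con = "Con gs Es"
  let ?x = "x0 gs Es"
  obtain Pc h where
    tr: "\<forall>C\<in>?Con. \<forall>k\<in>{1..B C}. ((+) (h C k)) ` (Pc C k) = ?x C" and
    dj: "\<forall>C\<in>?Con. \<forall>k\<in>{1..B C}. \<forall>D\<in>?Con. \<forall>l\<in>{1..B D}.
            (C, k) \<noteq> (D, l) \<longrightarrow> Pc C k \<inter> Pc D l = {}" and
    un: "(\<Union>C\<in>?Con. \<Union>k\<in>{1..B C}. Pc C k) = (\<Union>C\<in>{C\<in>?Con. A C \<noteq> 0}. ?x C)"
    using assms(2) unfolding edge_def by (elim exE conjE) iprover
  obtain L where L: "set L = ?Con" "distinct L"
    using finite_distinct_list[OF Con_finite] by blast
  have B1: "1 \<le> B C" if "C \<in> ?Con" for C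
    using assms(4) that by (metis One_nat_def Suc_leI bot_nat_0.extremum le_less_trans)
  have B2: "2 \<le> B C" if "C \<in> ?Con" "A C \<noteq> 0" for C
  proof -
    have "A C = 1" using assms(3) that by auto
    then show ?thesis using assms(4) that by fastforce
  qed
  have pdisj: "Pc C k \<inter> ?x D = {}" if "C \<in> ?Con" "k \<in> {1..B C}" "D \<in> ?Con" "A D = 0" for C k D
  proof (rule ccontr)
    assume "Pc C k \<inter> ?x D \<noteq> {}"
    then obtain y where y: "y \<in> Pc C k" "y \<in> ?x D" by blast
    have "y \<in> (\<Union>C\<in>{C\<in>?Con. A C \<noteq> 0}. ?x C)" using un that y by blast
    then obtain E where E: "E \<in> ?Con" "A E \<noteq> 0" "y \<in> ?x E" by blast
    have "E = D" using x0_disj[OF P E(1) that(3) E(3) y(2)] .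
    then show False using E that by simp
  qed
  have djC: "Pc C k \<inter> Pc D l = {}" if "C \<in> ?Con" "k \<in> {1..B C}" "D \<in> ?Con" "l \<in> {1..B D}"
    "(C, k) \<noteq> (D, l)" for C k D l
    using dj that by blast
  have trC: "((+) (h C k)) ` (Pc C k) = ?x C" if "C \<in> ?Con" "k \<in> {1..B C}" for C k
    using tr that by blast
  have nth: "L ! i \<in> ?Con" if "i < length L" for i using L(1) that by auto
  have dist: "L ! i \<noteq> L ! j" if "i < length L" "j < length L" "i \<noteq> j" for i j
    using L(2) that by (simp add: nth_eq_iff_index_eq)
  define As where "As i = Pc (L ! i) 1" for i
  define a where "a i = h (L ! i) 1" for i
  define Bs where "Bs i = (if A (L ! i) = 0 then ?x (L ! i) else Pc (L ! i) 2)" for i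
  define b where "b i = (if A (L ! i) = 0 then 0 else h (L ! i) 2)" for i
  have allU: "(\<Union>C\<in>?Con. ?x C) = UNIV" using x0_cover[OF P] by blast
  show ?thesis unfolding paradoxical_def
  proof (rule exI[of _ "length L"], rule exI[of _ "length L"], rule exI[of _ As], rule exI[of _ Bs],
      rule exI[of _ a], rule exI[of _ b], intro conjI allI impI)
    fix i j assume ij: "i < length L" "j < length L" "i \<noteq> j"
    show "As i \<inter> As j = {}" unfolding As_def
      using djC[OF nth[OF ij(1)] _ nth[OF ij(2)]] dist[OF ij] B1[OF nth[OF ij(1)]] B1[OF nth[OF ij(2)]]
      by simp
  next
    fix i j assume ij: "i < length L" "j < length L" "i \<noteq> j"
    note ci = nth[OF ij(1)] and cj = nth[OF ij(2)]
    show "Bs i \<inter> Bs j = {}"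
    proof (cases "A (L ! i) = 0")
      case a1: True
      show ?thesis
      proof (cases "A (L ! j) = 0")
        case True
        then show ?thesis unfolding Bs_def using a1 x0_disj[OF P ci cj] dist[OF ij] by auto
      next
        case False
        then show ?thesis unfolding Bs_def using a1 pdisj[OF cj _ ci, of 2] B2[OF cj] by auto
      qed
    next
      case a1: False
      show ?thesis
      proof (cases "A (L ! j) = 0")
        case True
        then show ?thesis unfolding Bs_def using a1 pdisj[OF ci _ cj, of 2] B2[OF ci] by auto
      next
        case False
        then show ?thesis unfolding Bs_def using a1 djC[OF ci _ cj] dist[OF ij] B2[OF ci] B2[OF cj] by simp
      qed
    qed
  next
    fix i j assume ij: "i < length L" "j < length L"
    note ci = nth[OF ij(1)] and cj = nth[OF ij(2)]
    show "As i \<inter> Bs j = {}"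
    proof (cases "A (L ! j) = 0")
      case True
      then show ?thesis unfolding Bs_def As_def using pdisj[OF ci _ cj] B1[OF ci] by auto
    next
      case False
      then show ?thesis unfolding Bs_def As_def using djC[OF ci _ cj] B1[OF ci] B2[OF cj] by simp
    qed
  next
    have "(\<Union>i<length L. (+) (a i) ` As i) = (\<Union>i<length L. ?x (L ! i))"
      unfolding As_def a_def using trC nth B1 by (intro SUP_cong refl) auto
    also have "\<dots> = (\<Union>C\<in>set L. ?x C)" by (auto simp: in_set_conv_nth) (meson nth_mem)
    finally show "(\<Union>i<length L. (+) (a i) ` As i) = UNIV" using L(1) allU by simp
  next
    have "(\<Union>i<length L. (+) (b i) ` Bs i) = (\<Union>i<length L. ?x (L ! i))"
      unfolding Bs_def b_def using trC nth B2 by (intro SUP_cong refl) auto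
    also have "\<dots> = (\<Union>C\<in>set L. ?x C)" by (auto simp: in_set_conv_nth) (meson nth_mem)
    finally show "(\<Union>i<length L. (+) (b i) ` Bs i) = UNIV" using L(1) allU by simp
  qed
qed

end
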